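(* Let $\mathcal F$ be a proper filter on $\omega$. In each of the following pairs the two games are dual, i.e. a player has a winning strategy in one game if and only if the other player has a winning strategy in the other game: (1) $\mathfrak G(\mathcal F^+,\omega,\mathcal F)$ and $\mathfrak G(\mathcal F,\omega,\mathcal F^c)$; (2) $\mathfrak G(\mathcal F^+,\omega,\mathcal F^+)$ and $\mathfrak G(\mathcal F,\omega,\mathcal F^* )$; (3) $\mathfrak G(\mathcal F^+,\omega,\mathcal F^c)$ and $\mathfrak G(\mathcal F,\omega,\mathcal F)$; (4) $\mathfrak G(\mathcal F^+,\omega,\mathcal F^* )$ and $\mathfrak G(\mathcal F,\omega,\mathcal F^+)$.
   Context: A filter on $\omega$ is a family $\mathcal F\subseteq\mathcal P(\omega)$ closed under finite intersections and supersets and containing all cofinite sets; it is proper if all its members are infinite. $\mathcal F^+=\{X:\omega\setminus X\notin\mathcal F\}$, $\mathcal F^c=\mathcal P(\omega)\setminus\mathcal F$, $\mathcal F^*=\mathcal P(\omega)\setminus\mathcal F^+$. Game $\mathfrak G(\mathcal X,\omega,\mathcal Z)$: at each stage $k\in\omega$, player I chooses $X_k\in\mathcal X$ and player II responds with $n_k\in X_k$; II wins if $\{n_k:k\in\omega\}\in\mathcal Z$, otherwise I wins. *)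

theory Defs
  imports Main
begin

definition is_filter :: "nat set set \<Rightarrow> bool" where
  "is_filter F \<longleftrightarrow>
     (\<forall>A\<in>F. \<forall>B\<in>F. A \<inter> B \<in> F) \<and>
     (\<forall>A B. A \<in> F \<and> A \<subseteq> B \<longrightarrow> B \<in> F) \<and>
     (\<forall>A. finite (- A) \<longrightarrow> A \<in> F)"

definition proper_filter :: "nat set set \<Rightarrow> bool" where
  "proper_filter F \<longleftrightarrow> is_filter F \<and> (\<forall>A\<in>F. infinite A)"

definition fplus :: "nat set set \<Rightarrow> nat set set" where
  "fplus F = {X. - X \<notin> F}"

definition fcompl :: "nat set set \<Rightarrow> nat set set" where
  "fcompl F = - F"

definition fstar :: "nat set set \<Rightarrow> nat set set" where
  "fstar F = - fplus F"

text \<open>A strategy for player I maps the finite sequence of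
  II's previous moves to I's next move; a strategy for player II maps the finite
  sequence of I's moves so far (X_0,...,X_k) to II's answer n_k.\<close>

definition I_wins :: "nat set set \<Rightarrow> nat set set \<Rightarrow> bool" where
  "I_wins XX ZZ \<longleftrightarrow> (\<exists>\<sigma> :: nat list \<Rightarrow> nat set.
     (\<forall>h. \<sigma> h \<in> XX) \<and>
     (\<forall>n :: nat \<Rightarrow> nat. (\<forall>k. n k \<in> \<sigma> (map n [0..<k])) \<longrightarrow> range n \<notin> ZZ))"

definition II_wins :: "nat set set \<Rightarrow> nat set set \<Rightarrow> bool" where
  "II_wins XX ZZ \<longleftrightarrow> (\<exists>\<tau> :: nat set list \<Rightarrow> nat.
     \<forall>X :: nat \<Rightarrow> nat set. (\<forall>k. X k \<in> XX) \<longrightarrow>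
       (\<forall>k. \<tau> (map X [0..<Suc k]) \<in> X k) \<and>
       range (\<lambda>k. \<tau> (map X [0..<Suc k])) \<in> ZZ)"

definition dual_games :: "nat set set \<Rightarrow> nat set set \<Rightarrow> nat set set \<Rightarrow> nat set set \<Rightarrow> bool" where
  "dual_games X1 Z1 X2 Z2 \<longleftrightarrow>
     (I_wins X1 Z1 \<longleftrightarrow> II_wins X2 Z2) \<and> (II_wins X1 Z1 \<longleftrightarrow> I_wins X2 Z2)"

end

theory Submission
  imports Defs
begin

definition respR :: "(nat list \<Rightarrow> nat set) \<Rightarrow> nat set list \<Rightarrow> nat list" where
  "respR \<sigma> xs = foldl (\<lambda>r X. r @ [SOME m. m \<in> X \<inter> \<sigma> r]) [] xs"

lemma respR_snoc: "respR \<sigma> (xs @ [X]) = respR \<sigma> xs @ [SOME m. m \<in> X \<inter> \<sigma> (respR \<sigma> xs)]"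
  by (simp add: respR_def)

definition chooseY :: "nat set set \<Rightarrow> (nat set list \<Rightarrow> nat) \<Rightarrow> nat set list \<Rightarrow> nat \<Rightarrow> nat set" where
  "chooseY B \<tau> ys m = (if \<exists>Y\<in>B. \<tau> (ys @ [Y]) = m then SOME Y. Y \<in> B \<and> \<tau> (ys @ [Y]) = m
      else SOME Y. Y \<in> B)"

definition recY :: "nat set set \<Rightarrow> (nat set list \<Rightarrow> nat) \<Rightarrow> nat list \<Rightarrow> nat set list" where
  "recY B \<tau> h = foldl (\<lambda>ys m. ys @ [chooseY B \<tau> ys m]) [] h"

lemma recY_snoc: "recY B \<tau> (h @ [m]) = recY B \<tau> h @ [chooseY B \<tau> (recY B \<tau> h) m]"
  by (simp add: recY_def)

lemma chooseY_in: "B \<noteq> {} \<Longrightarrow> chooseY B \<tau> ys m \<in> B"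
proof (cases "\<exists>Y\<in>B. \<tau> (ys @ [Y]) = m")
  case True
  then have "\<exists>Y. Y \<in> B \<and> \<tau> (ys @ [Y]) = m" by blast
  from someI_ex[OF this] True show ?thesis unfolding chooseY_def by simp
next
  case False
  assume "B \<noteq> {}"
  then have "\<exists>Y. Y \<in> B" by blast
  from someI_ex[OF this] False show ?thesis unfolding chooseY_def by simp
qed

lemma chooseY_eq: "Y \<in> B \<Longrightarrow> \<tau> (ys @ [Y]) = m \<Longrightarrow> \<tau> (ys @ [chooseY B \<tau> ys m]) = m"
proof -
  assume a: "Y \<in> B" "\<tau> (ys @ [Y]) = m"
  then have e: "\<exists>Y. Y \<in> B \<and> \<tau> (ys @ [Y]) = m" by blast
  have "\<exists>Y\<in>B. \<tau> (ys @ [Y]) = m" using a by blast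
  with someI_ex[OF e] show ?thesis unfolding chooseY_def by simp
qed

lemma recY_in: "B \<noteq> {} \<Longrightarrow> set (recY B \<tau> h) \<subseteq> B"
proof (induction h rule: rev_induct)
  case Nil then show ?case by (simp add: recY_def)
next
  case (snoc m h) then show ?case by (simp add: recY_snoc chooseY_in)
qed

lemma II_move:
  assumes P: "\<forall>X :: nat \<Rightarrow> nat set. (\<forall>k. X k \<in> B) \<longrightarrow>
       (\<forall>k. \<tau> (map X [0..<Suc k]) \<in> X k) \<and> range (\<lambda>k. \<tau> (map X [0..<Suc k])) \<in> Z"
    and "set xs \<subseteq> B" and "xs \<noteq> []"
  shows "\<tau> xs \<in> last xs"
proof -
  define X where "X i = (if i < length xs then xs ! i else last xs)" for i
  have XB: "\<forall>k. X k \<in> B" using assms(2,3) by (auto simp: X_def)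
  obtain k where k: "length xs = Suc k" using assms(3) by (cases xs) auto
  have "map X [0..<Suc k] = xs" using k by (intro nth_equalityI) (simp_all del: upt_Suc add: X_def)
  moreover have "X k = last xs" using k assms(3) by (simp add: X_def last_conv_nth)
  ultimately show ?thesis using P XB by metis
qed

lemma dual_lemma:
  assumes meet: "\<forall>a\<in>A. \<forall>b\<in>B. a \<inter> b \<noteq> {}"
    and cover: "\<forall>S. S \<in> A \<or> - S \<in> B"
    and Bne: "B \<noteq> {}"
  shows "I_wins A Z \<longleftrightarrow> II_wins B (- Z)"
proof
  assume "I_wins A Z"
  then obtain \<sigma> where s1: "\<forall>h. \<sigma> h \<in> A"
    and s2: "\<forall>n :: nat \<Rightarrow> nat. (\<forall>k. n k \<in> \<sigma> (map n [0..<k])) \<longrightarrow> range n \<notin> Z"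
    unfolding I_wins_def by blast
  define \<tau> where "\<tau> xs = last (respR \<sigma> xs)" for xs
  show "II_wins B (- Z)" unfolding II_wins_def
  proof (intro exI allI impI)
    fix X :: "nat \<Rightarrow> nat set" assume XB: "\<forall>k. X k \<in> B"
    define n where "n k = \<tau> (map X [0..<Suc k])" for k
    have n_eq: "n k = (SOME m. m \<in> X k \<inter> \<sigma> (respR \<sigma> (map X [0..<k])))" for k
      by (simp add: n_def \<tau>_def respR_snoc)
    have R: "respR \<sigma> (map X [0..<k]) = map n [0..<k]" for k
      by (induction k) (simp_all add: respR_def[of _ "[]"] respR_snoc n_eq)
    have nk: "n k \<in> X k \<inter> \<sigma> (map n [0..<k])" for k
    proof -
      have "X k \<inter> \<sigma> (map n [0..<k]) \<noteq> {}" using meet s1 XB by blast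
      then have "\<exists>m. m \<in> X k \<inter> \<sigma> (map n [0..<k])" by blast
      from someI_ex[OF this] show ?thesis unfolding n_eq[of k] R[of k] .
    qed
    have "range n \<notin> Z" using s2 nk by blast
    then show "(\<forall>k. \<tau> (map X [0..<Suc k]) \<in> X k) \<and> range (\<lambda>k. \<tau> (map X [0..<Suc k])) \<in> - Z"
    proof -
      have e: "\<And>k. \<tau> (map X [0..<Suc k]) = n k" by (simp only: n_def)
      show ?thesis unfolding e using nk \<open>range n \<notin> Z\<close> by blast
    qed
  qed
next
  assume "II_wins B (- Z)"
  then obtain \<tau> where P: "\<forall>X :: nat \<Rightarrow> nat set. (\<forall>k. X k \<in> B) \<longrightarrow>
       (\<forall>k. \<tau> (map X [0..<Suc k]) \<in> X k) \<and> range (\<lambda>k. \<tau> (map X [0..<Suc k])) \<in> - Z"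
    unfolding II_wins_def by blast
  define \<sigma> where "\<sigma> h = {\<tau> (recY B \<tau> h @ [Y]) | Y. Y \<in> B}" for h
  have sA: "\<sigma> h \<in> A" for h
  proof (rule ccontr)
    assume "\<sigma> h \<notin> A"
    then have "- \<sigma> h \<in> B" using cover by blast
    moreover have "set (recY B \<tau> h @ [- \<sigma> h]) \<subseteq> B" using recY_in[OF Bne, of \<tau> h] calculation by simp
    ultimately have "\<tau> (recY B \<tau> h @ [- \<sigma> h]) \<in> last (recY B \<tau> h @ [- \<sigma> h])"
      by (intro II_move[OF P]) simp_all
    then have "\<tau> (recY B \<tau> h @ [- \<sigma> h]) \<in> - \<sigma> h" by simp
    moreover have "\<tau> (recY B \<tau> h @ [- \<sigma> h]) \<in> \<sigma> h" using \<open>- \<sigma> h \<in> B\<close> unfolding \<sigma>_def by blast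
    ultimately show False by blast
  qed
  show "I_wins A Z" unfolding I_wins_def
  proof (intro exI conjI allI impI)
    fix h show "\<sigma> h \<in> A" by (rule sA)
  next
    fix n :: "nat \<Rightarrow> nat" assume nk: "\<forall>k. n k \<in> \<sigma> (map n [0..<k])"
    define X where "X k = chooseY B \<tau> (recY B \<tau> (map n [0..<k])) (n k)" for k
    have R: "recY B \<tau> (map n [0..<k]) = map X [0..<k]" for k
    proof (induction k)
      case 0 then show ?case by (simp add: recY_def)
    next
      case (Suc k)
      have "recY B \<tau> (map n [0..<Suc k]) = recY B \<tau> (map n [0..<k]) @ [X k]"
        unfolding X_def by (simp add: recY_snoc)
      then show ?case by (simp only: Suc.IH list.map upt_Suc_append map_append le0 if_True)
    qed
    have XB: "\<forall>k. X k \<in> B" using chooseY_in[OF Bne] by (simp add: X_def)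
    have eq: "\<tau> (map X [0..<Suc k]) = n k" for k
    proof -
      have "n k \<in> \<sigma> (map n [0..<k])" using nk by blast
      then have "\<exists>Y. Y \<in> B \<and> \<tau> (recY B \<tau> (map n [0..<k]) @ [Y]) = n k"
        unfolding \<sigma>_def by (simp only: mem_Collect_eq) metis
      then obtain Y where "Y \<in> B" "\<tau> (recY B \<tau> (map n [0..<k]) @ [Y]) = n k"
        by blast
      then have "\<tau> (recY B \<tau> (map n [0..<k]) @ [X k]) = n k"
        unfolding X_def by (rule chooseY_eq)
      then show ?thesis by (simp only: R upt_Suc_append map_append le0 list.map)
    qed
    have "range (\<lambda>k. \<tau> (map X [0..<Suc k])) \<in> - Z" using P XB by blast
    then show "range n \<notin> Z" unfolding eq by simp
  qed
qed

theorem theorem2p10: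
  fixes F :: "nat set set"
  assumes "proper_filter F"
  shows "dual_games (fplus F) F F (fcompl F) \<and>
         dual_games (fplus F) (fplus F) F (fstar F) \<and>
         dual_games (fplus F) (fcompl F) F F \<and>
         dual_games (fplus F) (fstar F) F (fplus F)"
proof -
  have up: "\<And>A B. A \<in> F \<Longrightarrow> A \<subseteq> B \<Longrightarrow> B \<in> F" and cof: "\<And>A. finite (- A) \<Longrightarrow> A \<in> F"
    and inf: "\<And>A. A \<in> F \<Longrightarrow> infinite A"
    using assms unfolding proper_filter_def is_filter_def by blast+
  have UF: "UNIV \<in> F" using cof by simp
  have EF: "{} \<notin> F" using inf by blast
  have m1: "\<forall>a\<in>fplus F. \<forall>b\<in>F. a \<inter> b \<noteq> {}"
    unfolding fplus_def
  proof (intro ballI notI)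
    fix a b assume "a \<in> {X. - X \<notin> F}" "b \<in> F" "a \<inter> b = {}"
    moreover have "b \<subseteq> - a" using calculation by blast
    ultimately show False using up by blast
  qed
  have m2: "\<forall>a\<in>F. \<forall>b\<in>fplus F. a \<inter> b \<noteq> {}"
    using m1 by blast
  have c1: "\<forall>S. S \<in> fplus F \<or> - S \<in> F" unfolding fplus_def by auto
  have c2: "\<forall>S. S \<in> F \<or> - S \<in> fplus F" unfolding fplus_def by auto
  have ne1: "F \<noteq> {}" using UF by blast
  have "UNIV \<in> fplus F" using EF by (simp add: fplus_def)
  then have ne2: "fplus F \<noteq> {}" by blast
  have D: "dual_games (fplus F) Z F (- Z)" for Z
    unfolding dual_games_def
    using dual_lemma[OF m1 c1 ne1, of Z] dual_lemma[OF m2 c2 ne2, of "- Z"] by simp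
  show ?thesis
    using D[of F] D[of "fplus F"] D[of "fcompl F"] D[of "fstar F"]
    by (simp add: fcompl_def fstar_def)
qed

end
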